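(* Let $\mathcal Z\subset\mathbb R^k$ be compact with diameter $\mathsf D$, let $z$ be a random variable taking values in $\mathcal Z$, and let $f:\mathcal Z\to\mathbb R^d$ be $\mathsf L$-Lipschitz (Euclidean norms). Let $\varepsilon_{\mathrm{noise}}\sim\mathcal N(0,\sigma^2I_d)$, $\sigma>0$, be independent of $z$, set $x^{\mathrm{con}}=f(z)+\varepsilon_{\mathrm{noise}}$, and $x=\mathcal Q_S(x^{\mathrm{con}})$, where $\mathcal Q_S:\mathbb R^d\to\{0,\dots,S\}^d$ is $[\mathcal Q_S(y)]^i=\min\{\max\{\lfloor y^i\rfloor,0\},S\}$. Then the law $q_{\mathrm{data}}$ of $x$ satisfies $$\mathcal B(q_{\mathrm{data}})\le k\log\Big(2+\frac{2\mathsf D\mathsf L}{\sigma}\Big).$$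
   Context: For a random vector $x=(x^1,\dots,x^d)$ with law $q$ on a finite product set, the dual total correlation is $\mathcal B(q)=\mathcal H(x)-\sum_{i=1}^d\mathcal H(x^i\mid x^{-i})$, where $\mathcal H$ is Shannon entropy and $x^{-i}$ is $x$ with coordinate $i$ removed. *)

theory Defs
  imports "HOL-Probability.Probability"
begin

definition quant :: "nat \<Rightarrow> real^'d \<Rightarrow> ('d \<Rightarrow> nat)" where
  "quant S y = (\<lambda>i. nat (min (max \<lfloor>y $ i\<rfloor> 0) (int S)))"

definition iso_gauss_density :: "real \<Rightarrow> real^'d \<Rightarrow> real" where
  "iso_gauss_density \<sigma> y = (\<Prod>i\<in>UNIV. normal_density 0 \<sigma> (y $ i))"

text \<open>Discrete laws q on a finite product set X (functions 'd => 'a).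
  Shannon entropy (natural log, 0 log 0 = 0).\<close>
definition shannon_entropy :: "('d \<Rightarrow> 'a) set \<Rightarrow> (('d \<Rightarrow> 'a) \<Rightarrow> real) \<Rightarrow> real" where
  "shannon_entropy X q = - (\<Sum>x\<in>X. q x * ln (q x))"

definition marg_minus :: "('d \<Rightarrow> 'a) set \<Rightarrow> (('d \<Rightarrow> 'a) \<Rightarrow> real) \<Rightarrow> 'd \<Rightarrow> ('d \<Rightarrow> 'a) \<Rightarrow> real" where
  "marg_minus X q i y = (\<Sum>x\<in>{x\<in>X. \<forall>j. j \<noteq> i \<longrightarrow> x j = y j}. q x)"

definition cond_entropy_coord :: "('d \<Rightarrow> 'a) set \<Rightarrow> (('d \<Rightarrow> 'a) \<Rightarrow> real) \<Rightarrow> 'd \<Rightarrow> real" where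
  "cond_entropy_coord X q i = - (\<Sum>x\<in>X. q x * ln (q x / marg_minus X q i x))"

definition dual_total_correlation :: "('d::finite \<Rightarrow> 'a) set \<Rightarrow> (('d \<Rightarrow> 'a) \<Rightarrow> real) \<Rightarrow> real" where
  "dual_total_correlation X q = shannon_entropy X q - (\<Sum>i\<in>UNIV. cond_entropy_coord X q i)"

end

theory Submission
  imports Defs
begin


lemma logsum_pt:
  fixes a b A B :: real
  assumes "0 \<le> a" "0 \<le> b" "b = 0 \<longrightarrow> a = 0" "A > 0" "B > 0"
  shows "a * ln (A/B) + a - b * (A/B) \<le> a * ln (a / b)"
proof (cases "a = 0")
  case True then show ?thesis using assms by simp
next
  case False
  then have a: "a > 0" and b: "b > 0" using assms by auto
  have "ln (b*A/(a*B)) \<le> b*A/(a*B) - 1" using a b assms by (intro ln_le_minus_one) simp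
  moreover have "ln (b*A/(a*B)) = ln (A/B) - ln (a/b)"
    using a b assms by (simp add: ln_div ln_mult)
  ultimately have "a * (ln (A/B) - ln (a/b)) \<le> a * (b*A/(a*B) - 1)"
    using a by (intro mult_left_mono) auto
  also have "a * (b*A/(a*B) - 1) = b * (A/B) - a" using a b by (simp add: field_simps)
  finally show ?thesis by (simp add: algebra_simps)
qed

lemma logsum_integral:
  fixes N :: "'a measure" and a b :: "'a \<Rightarrow> real"
  assumes ia: "integrable N a" and ib: "integrable N b"
    and iab: "integrable N (\<lambda>t. a t * ln (a t / b t))"
    and pos: "\<And>t. t \<in> space N \<Longrightarrow> 0 \<le> a t \<and> 0 \<le> b t \<and> (b t = 0 \<longrightarrow> a t = 0)"
    and A: "integral\<^sup>L N a > 0" and B: "integral\<^sup>L N b > 0"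
  shows "integral\<^sup>L N a * ln (integral\<^sup>L N a / integral\<^sup>L N b)
           \<le> integral\<^sup>L N (\<lambda>t. a t * ln (a t / b t))"
proof -
  define A' where "A' = integral\<^sup>L N a"
  define B' where "B' = integral\<^sup>L N b"
  have "integral\<^sup>L N (\<lambda>t. a t * ln (A'/B') + a t - b t * (A'/B'))
        = A' * ln (A'/B') + A' - B' * (A'/B')"
    using ia ib unfolding A'_def B'_def by simp
  also have "\<dots> = A' * ln (A'/B')" using B unfolding B'_def by simp
  finally have eq: "integral\<^sup>L N (\<lambda>t. a t * ln (A'/B') + a t - b t * (A'/B')) = A' * ln (A'/B')" .
  have "integral\<^sup>L N (\<lambda>t. a t * ln (A'/B') + a t - b t * (A'/B'))
        \<le> integral\<^sup>L N (\<lambda>t. a t * ln (a t / b t))"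
  proof (rule integral_mono)
    show "integrable N (\<lambda>t. a t * ln (A'/B') + a t - b t * (A'/B'))" using ia ib by auto
    show "integrable N (\<lambda>t. a t * ln (a t / b t))" by (rule iab)
    fix t assume "t \<in> space N"
    then show "a t * ln (A'/B') + a t - b t * (A'/B') \<le> a t * ln (a t / b t)"
      using pos[of t] A B unfolding A'_def B'_def by (intro logsum_pt) auto
  qed
  then show ?thesis using eq unfolding A'_def B'_def by simp
qed



lemma pos_integral_pos:
  fixes M :: "'w measure" and g :: "'w \<Rightarrow> real"
  assumes M: "prob_space M" and ig: "integrable M g" and pos: "\<And>w. w \<in> space M \<Longrightarrow> g w > 0"
  shows "integral\<^sup>L M g > 0"
proof -
  interpret prob_space M by fact
  have nn: "integral\<^sup>L M g \<ge> 0" using pos by (intro integral_nonneg_AE AE_I2) (auto intro: less_imp_le)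
  show ?thesis
  proof (rule ccontr)
    assume "\<not> ?thesis"
    then have "integral\<^sup>L M g = 0" using nn by simp
    then have "AE w in M. g w = 0"
      using integral_nonneg_eq_0_iff_AE[OF ig] pos by (auto intro: less_imp_le)
    moreover have "AE w in M. g w > 0" using pos by auto
    ultimately have "AE w in M. False" by eventually_elim auto
    then show False by simp
  qed
qed

lemma entropy_bound:
  fixes M :: "'w measure" and p :: "'w \<Rightarrow> 'd::finite \<Rightarrow> nat \<Rightarrow> real"
    and q Q :: "('d \<Rightarrow> nat) \<Rightarrow> real" and S :: nat and C :: real
  assumes M: "prob_space M"
    and meas: "\<And>i a. (\<lambda>\<omega>. p \<omega> i a) \<in> borel_measurable M"
    and ppos: "\<And>\<omega> i a. \<omega> \<in> space M \<Longrightarrow> a \<le> S \<Longrightarrow> p \<omega> i a > 0"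
    and psum: "\<And>\<omega> i. \<omega> \<in> space M \<Longrightarrow> (\<Sum>a\<in>{0..S}. p \<omega> i a) = 1"
    and q: "\<And>x. x \<in> PiE UNIV (\<lambda>_. {0..S}) \<Longrightarrow> q x = (\<integral>\<omega>. (\<Prod>i\<in>UNIV. p \<omega> i (x i)) \<partial>M)"
    and Qpos: "\<And>x. x \<in> PiE UNIV (\<lambda>_. {0..S}) \<Longrightarrow> Q x > 0"
    and Qsum: "(\<Sum>x\<in>PiE UNIV (\<lambda>_. {0..S}). Q x) \<le> 1"
    and KL: "\<And>\<omega>. \<omega> \<in> space M \<Longrightarrow>
       (\<Sum>x\<in>PiE UNIV (\<lambda>_. {0..S}). (\<Prod>i\<in>UNIV. p \<omega> i (x i)) * ln ((\<Prod>i\<in>UNIV. p \<omega> i (x i)) / Q x)) \<le> C"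
  shows "dual_total_correlation (PiE UNIV (\<lambda>_. {0..S})) q \<le> C"
proof -
  interpret prob_space M by fact
  define X where "X = PiE (UNIV::'d set) (\<lambda>_. {0..S})"
  define P where "P \<omega> x = (\<Prod>i\<in>UNIV. p \<omega> i (x i))" for \<omega> x
  have finX: "finite X" unfolding X_def by (intro finite_PiE) auto
  have memX: "x \<in> X \<longleftrightarrow> (\<forall>i. x i \<le> S)" for x unfolding X_def by (auto simp: PiE_iff)
  have ple1: "p \<omega> i a \<le> 1" if "\<omega> \<in> space M" "a \<le> S" for \<omega> i a
  proof -
    have "p \<omega> i a \<le> (\<Sum>a\<in>{0..S}. p \<omega> i a)"
      using that ppos by (intro member_le_sum) (auto intro: less_imp_le)
    then show ?thesis using psum[OF that(1)] by simp
  qed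
  have Ppos: "P \<omega> x > 0" if "\<omega> \<in> space M" "x \<in> X" for \<omega> x
    using that ppos unfolding P_def memX by (intro prod_pos) auto
  have Ple1: "P \<omega> x \<le> 1" if "\<omega> \<in> space M" "x \<in> X" for \<omega> x
    using that ppos ple1 unfolding P_def memX by (intro prod_le_1) (auto intro: less_imp_le)
  have Psum: "(\<Sum>x\<in>X. P \<omega> x) = 1" if "\<omega> \<in> space M" for \<omega>
  proof -
    have "(\<Prod>i\<in>(UNIV::'d set). \<Sum>a\<in>{0..S}. p \<omega> i a) = (\<Sum>x\<in>X. P \<omega> x)"
      unfolding X_def P_def by (rule prod_sum_PiE) auto
    then show ?thesis using psum[OF that] by simp
  qed
  have Pmeas: "(\<lambda>\<omega>. P \<omega> x) \<in> borel_measurable M" for x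
    unfolding P_def using meas by (intro borel_measurable_prod) auto
  have IP: "integrable M (\<lambda>\<omega>. P \<omega> x)" if "x \<in> X" for x
  proof (rule integrable_const_bound[where B=1])
    show "AE \<omega> in M. norm (P \<omega> x) \<le> 1"
    proof (rule AE_I2)
      fix \<omega> assume "\<omega> \<in> space M"
      then show "norm (P \<omega> x) \<le> 1" using Ppos[of \<omega> x] Ple1[of \<omega> x] that by simp
    qed
  qed (rule Pmeas)
  have qP: "q x = integral\<^sup>L M (\<lambda>\<omega>. P \<omega> x)" if "x \<in> X" for x
    using q that unfolding X_def P_def by simp
  have qpos: "q x > 0" if "x \<in> X" for x
    using pos_integral_pos[OF M IP[OF that]] Ppos that qP by auto
  have qsum: "(\<Sum>x\<in>X. q x) = 1"
  proof -
    have "(\<Sum>x\<in>X. q x) = (\<Sum>x\<in>X. integral\<^sup>L M (\<lambda>\<omega>. P \<omega> x))" using qP by simp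
    also have "\<dots> = integral\<^sup>L M (\<lambda>\<omega>. \<Sum>x\<in>X. P \<omega> x)" using IP Bochner_Integration.integral_sum[where I=X and M=M and f="\<lambda>x \<omega>. P \<omega> x"] by simp
    also have "\<dots> = integral\<^sup>L M (\<lambda>\<omega>. 1)" using Psum by (intro Bochner_Integration.integral_cong) auto
    finally show ?thesis by (simp add: prob_space)
  qed
  have gibbs: "- (\<Sum>x\<in>X. q x * ln (q x)) \<le> (\<Sum>x\<in>X. q x * (- ln (Q x)))"
  proof -
    have "q x * (ln (Q x) - ln (q x)) \<le> Q x - q x" if "x \<in> X" for x
    proof -
      have "ln (Q x / q x) \<le> Q x / q x - 1" using Qpos[of x] qpos[OF that] that unfolding X_def
        by (intro ln_le_minus_one) auto
      moreover have "ln (Q x / q x) = ln (Q x) - ln (q x)"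
        using Qpos[of x] qpos[OF that] that unfolding X_def by (simp add: ln_div)
      ultimately have "q x * (ln (Q x) - ln (q x)) \<le> q x * (Q x / q x - 1)"
        using qpos[OF that] by (intro mult_left_mono) auto
      also have "\<dots> = Q x - q x" using qpos[OF that] by (simp add: field_simps)
      finally show ?thesis .
    qed
    then have "(\<Sum>x\<in>X. q x * (ln (Q x) - ln (q x))) \<le> (\<Sum>x\<in>X. Q x - q x)"
      by (intro sum_mono) auto
    also have "\<dots> \<le> 0" using Qsum qsum unfolding X_def[symmetric] by (simp add: sum_subtractf)
    finally show ?thesis by (simp add: algebra_simps sum_subtractf sum_negf)
  qed
  define R where "R \<omega> i x = (\<Prod>j\<in>UNIV - {i}. p \<omega> j (x j))" for \<omega> i and x :: "'d \<Rightarrow> nat"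
  have PR: "P \<omega> x = p \<omega> i (x i) * R \<omega> i x" for \<omega> i x
    unfolding P_def R_def by (rule prod.remove) auto
  have Rpos: "R \<omega> i x > 0" if "\<omega> \<in> space M" "x \<in> X" for \<omega> i x
    using that ppos unfolding R_def memX by (intro prod_pos) auto
  have Rle1: "R \<omega> i x \<le> 1" if "\<omega> \<in> space M" "x \<in> X" for \<omega> i x
    using that ppos ple1 unfolding R_def memX by (intro prod_le_1) (auto intro: less_imp_le)
  have Rmeas: "(\<lambda>\<omega>. R \<omega> i x) \<in> borel_measurable M" for i x
    unfolding R_def using meas by (intro borel_measurable_prod) auto
  have IR: "integrable M (\<lambda>\<omega>. R \<omega> i x)" if "x \<in> X" for i x
  proof (rule integrable_const_bound[where B=1])
    show "AE \<omega> in M. norm (R \<omega> i x) \<le> 1"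
    proof (rule AE_I2)
      fix \<omega> assume "\<omega> \<in> space M"
      then show "norm (R \<omega> i x) \<le> 1" using Rpos[of \<omega> x i] Rle1[of \<omega> x i] that by simp
    qed
  qed (rule Rmeas)
  have Yeq: "{y\<in>X. \<forall>j. j \<noteq> i \<longrightarrow> y j = x j} = (\<lambda>a. x(i:=a)) ` {0..S}" if "x \<in> X" for i x
  proof (rule set_eqI)
    fix y
    show "y \<in> {y\<in>X. \<forall>j. j \<noteq> i \<longrightarrow> y j = x j} \<longleftrightarrow> y \<in> (\<lambda>a. x(i:=a)) ` {0..S}"
    proof
      assume "y \<in> {y\<in>X. \<forall>j. j \<noteq> i \<longrightarrow> y j = x j}"
      then have "y = x(i := y i)" "y i \<in> {0..S}" using memX by auto
      then show "y \<in> (\<lambda>a. x(i:=a)) ` {0..S}" by blast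
    next
      assume "y \<in> (\<lambda>a. x(i:=a)) ` {0..S}"
      then show "y \<in> {y\<in>X. \<forall>j. j \<noteq> i \<longrightarrow> y j = x j}" using that memX by auto
    qed
  qed
  have injupd: "inj_on (\<lambda>a. x(i:=a)) A" for x i and A :: "nat set"
    by (rule inj_onI) (metis fun_upd_same)
  have Rupd: "R \<omega> i (x(i:=a)) = R \<omega> i x" for \<omega> i x a
    unfolding R_def by (intro prod.cong) auto
  have msum: "(\<Sum>y\<in>{y\<in>X. \<forall>j. j \<noteq> i \<longrightarrow> y j = x j}. P \<omega> y) = R \<omega> i x"
    if "\<omega> \<in> space M" "x \<in> X" for \<omega> i x
  proof -
    have "(\<Sum>y\<in>{y\<in>X. \<forall>j. j \<noteq> i \<longrightarrow> y j = x j}. P \<omega> y) = (\<Sum>a\<in>{0..S}. P \<omega> (x(i:=a)))"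
      unfolding Yeq[OF that(2)] by (subst sum.reindex[OF injupd]) simp
    also have "\<dots> = (\<Sum>a\<in>{0..S}. p \<omega> i a * R \<omega> i x)"
      by (intro sum.cong refl) (simp add: PR[of \<omega> "x(i:=_)" i] Rupd)
    also have "\<dots> = R \<omega> i x" using psum[OF that(1), of i] by (simp add: sum_distrib_right[symmetric])
    finally show ?thesis .
  qed
  have plog_bound: "\<bar>P \<omega> x * ln (p \<omega> i (x i))\<bar> \<le> 1" if "\<omega> \<in> space M" "x \<in> X" for \<omega> i x
  proof -
    have pp: "p \<omega> i (x i) > 0" "p \<omega> i (x i) \<le> 1" using that ppos ple1 memX by auto
    have lnle: "ln (p \<omega> i (x i)) \<le> 0" using pp by simp
    have "ln (1 / p \<omega> i (x i)) \<le> 1 / p \<omega> i (x i) - 1" using pp by (intro ln_le_minus_one) auto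
    then have "- ln (p \<omega> i (x i)) \<le> 1 / p \<omega> i (x i) - 1" using pp by (simp add: ln_div)
    then have "p \<omega> i (x i) * (- ln (p \<omega> i (x i))) \<le> p \<omega> i (x i) * (1 / p \<omega> i (x i) - 1)"
      using pp by (intro mult_left_mono) auto
    also have "\<dots> \<le> 1" using pp by (simp add: field_simps)
    finally have a: "p \<omega> i (x i) * (- ln (p \<omega> i (x i))) \<le> 1" .
    have "P \<omega> x \<le> p \<omega> i (x i)" using PR[of \<omega> x i] Rle1[OF that, of i] pp
      by (simp add: mult_left_le)
    then have "P \<omega> x * (- ln (p \<omega> i (x i))) \<le> p \<omega> i (x i) * (- ln (p \<omega> i (x i)))"
      using lnle by (intro mult_right_mono) auto
    moreover have "P \<omega> x * ln (p \<omega> i (x i)) \<le> 0" using Ppos[OF that] lnle by (simp add: mult_nonneg_nonpos less_imp_le)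
    ultimately show ?thesis using a by (simp add: abs_le_iff)
  qed
  have I2: "integrable M (\<lambda>\<omega>. P \<omega> x * ln (p \<omega> i (x i)))" if "x \<in> X" for x i
  proof (rule integrable_const_bound[where B=1])
    show "AE \<omega> in M. norm (P \<omega> x * ln (p \<omega> i (x i))) \<le> 1"
      using plog_bound that by (intro AE_I2) simp
  qed (use Pmeas meas in measurable)
  have step6: "q x * ln (q x / marg_minus X q i x) \<le> (\<integral>\<omega>. P \<omega> x * ln (p \<omega> i (x i)) \<partial>M)"
    if "x \<in> X" for i x
  proof -
    have mm: "marg_minus X q i x = integral\<^sup>L M (\<lambda>\<omega>. R \<omega> i x)"
    proof -
      have "marg_minus X q i x = (\<Sum>y\<in>{y\<in>X. \<forall>j. j \<noteq> i \<longrightarrow> y j = x j}. integral\<^sup>L M (\<lambda>\<omega>. P \<omega> y))"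
        unfolding marg_minus_def using qP by (intro sum.cong) auto
      also have "\<dots> = integral\<^sup>L M (\<lambda>\<omega>. \<Sum>y\<in>{y\<in>X. \<forall>j. j \<noteq> i \<longrightarrow> y j = x j}. P \<omega> y)"
        using IP Bochner_Integration.integral_sum[where I="{y\<in>X. \<forall>j. j \<noteq> i \<longrightarrow> y j = x j}" and f="\<lambda>x \<omega>. P \<omega> x"] by simp
      also have "\<dots> = integral\<^sup>L M (\<lambda>\<omega>. R \<omega> i x)"
        using msum that by (intro Bochner_Integration.integral_cong) auto
      finally show ?thesis .
    qed
    have "q x * ln (q x / marg_minus X q i x)
        = integral\<^sup>L M (\<lambda>\<omega>. P \<omega> x) * ln (integral\<^sup>L M (\<lambda>\<omega>. P \<omega> x) / integral\<^sup>L M (\<lambda>\<omega>. R \<omega> i x))"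
      using mm qP[OF that] by simp
    also have "\<dots> \<le> integral\<^sup>L M (\<lambda>\<omega>. P \<omega> x * ln (P \<omega> x / R \<omega> i x))"
    proof (rule logsum_integral)
      show "integrable M (\<lambda>\<omega>. P \<omega> x)" using IP that .
      show "integrable M (\<lambda>\<omega>. R \<omega> i x)" using IR that .
      have "integrable M (\<lambda>\<omega>. P \<omega> x * ln (p \<omega> i (x i)))" using I2 that .
      moreover have "integrable M (\<lambda>\<omega>. P \<omega> x * ln (P \<omega> x / R \<omega> i x)) = integrable M (\<lambda>\<omega>. P \<omega> x * ln (p \<omega> i (x i)))"
        using Rpos that by (intro Bochner_Integration.integrable_cong) (auto simp: PR[of _ x i])
      ultimately show "integrable M (\<lambda>\<omega>. P \<omega> x * ln (P \<omega> x / R \<omega> i x))" by simp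
      show "\<And>t. t \<in> space M \<Longrightarrow> 0 \<le> P t x \<and> 0 \<le> R t i x \<and> (R t i x = 0 \<longrightarrow> P t x = 0)"
        using Ppos Rpos that by (metis less_imp_le less_irrefl)
      show "integral\<^sup>L M (\<lambda>\<omega>. P \<omega> x) > 0" using qpos[OF that] qP[OF that] by simp
      show "integral\<^sup>L M (\<lambda>\<omega>. R \<omega> i x) > 0"
        using pos_integral_pos[OF M IR[OF that]] Rpos that by auto
    qed
    also have "\<dots> = (\<integral>\<omega>. P \<omega> x * ln (p \<omega> i (x i)) \<partial>M)"
      using Rpos that by (intro Bochner_Integration.integral_cong) (auto simp: PR[of _ x i])
    finally show ?thesis .
  qed
  define F where "F \<omega> = (\<Sum>x\<in>X. P \<omega> x * (- ln (Q x))) + (\<Sum>i\<in>UNIV. \<Sum>x\<in>X. P \<omega> x * ln (p \<omega> i (x i)))" for \<omega>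
  have IF: "integrable M F"
    unfolding F_def using IP I2 by (intro Bochner_Integration.integrable_add Bochner_Integration.integrable_sum integrable_mult_left) auto
  have intF: "integral\<^sup>L M F = (\<Sum>x\<in>X. q x * (- ln (Q x))) + (\<Sum>i\<in>UNIV. \<Sum>x\<in>X. (\<integral>\<omega>. P \<omega> x * ln (p \<omega> i (x i)) \<partial>M))"
    unfolding F_def using IP I2 qP
    by (subst Bochner_Integration.integral_add) (auto intro!: Bochner_Integration.integrable_sum integrable_mult_left
        simp: Bochner_Integration.integral_sum)
  have Fle: "F \<omega> \<le> C" if "\<omega> \<in> space M" for \<omega>
  proof -
    have "F \<omega> = (\<Sum>x\<in>X. P \<omega> x * (- ln (Q x)) + (\<Sum>i\<in>UNIV. P \<omega> x * ln (p \<omega> i (x i))))"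
      unfolding F_def sum.distrib
      by (subst sum.swap[where A=UNIV and B=X]) simp
    also have "\<dots> = (\<Sum>x\<in>X. P \<omega> x * ln (P \<omega> x / Q x))"
    proof (intro sum.cong refl)
      fix x assume x: "x \<in> X"
      have "ln (P \<omega> x) = (\<Sum>i\<in>UNIV. ln (p \<omega> i (x i)))"
        unfolding P_def using x that ppos memX by (intro ln_prod) (auto, metis less_irrefl)
      then show "P \<omega> x * (- ln (Q x)) + (\<Sum>i\<in>UNIV. P \<omega> x * ln (p \<omega> i (x i))) = P \<omega> x * ln (P \<omega> x / Q x)"
        using Ppos[OF that x] Qpos[of x] x unfolding X_def
        by (simp add: ln_div sum_distrib_left[symmetric] algebra_simps)
    qed
    also have "\<dots> \<le> C" using KL[OF that] unfolding X_def P_def .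
    finally show ?thesis .
  qed
  have "integral\<^sup>L M F \<le> integral\<^sup>L M (\<lambda>_. C)"
    using IF Fle by (intro integral_mono) auto
  then have intFC: "integral\<^sup>L M F \<le> C" by (simp add: prob_space)
  have "dual_total_correlation X q
      = - (\<Sum>x\<in>X. q x * ln (q x)) + (\<Sum>i\<in>UNIV. \<Sum>x\<in>X. q x * ln (q x / marg_minus X q i x))"
    unfolding dual_total_correlation_def shannon_entropy_def cond_entropy_coord_def
    by (simp add: sum_negf)
  also have "\<dots> \<le> (\<Sum>x\<in>X. q x * (- ln (Q x))) + (\<Sum>i\<in>UNIV. \<Sum>x\<in>X. (\<integral>\<omega>. P \<omega> x * ln (p \<omega> i (x i)) \<partial>M))"
    using gibbs step6 by (intro add_mono sum_mono) auto
  also have "\<dots> \<le> C" using intF intFC by simp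
  finally show ?thesis unfolding X_def .
qed



definition quant1 :: "nat \<Rightarrow> real \<Rightarrow> nat" where
  "quant1 S t = nat (min (max \<lfloor>t\<rfloor> 0) (int S))"

definition cell :: "nat \<Rightarrow> nat \<Rightarrow> real set" where
  "cell S a = {t. quant1 S t = a}"

definition pc :: "real \<Rightarrow> nat \<Rightarrow> real \<Rightarrow> nat \<Rightarrow> real" where
  "pc \<sigma> S w a = (\<integral>s. indicator (cell S a) s * normal_density w \<sigma> s \<partial>lborel)"

lemma quant1_meas[measurable]: "quant1 S \<in> measurable borel (count_space UNIV)"
  unfolding quant1_def[abs_def] by measurable

lemma cell_sets[measurable]: "cell S a \<in> sets borel"
proof -
  have "cell S a = quant1 S -` {a} \<inter> space borel" unfolding cell_def by auto
  then show ?thesis using measurable_sets[OF quant1_meas, of "{a}"] by simp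
qed

lemma quant1_le: "quant1 S t \<le> S"
  unfolding quant1_def by auto

lemma cell_sum: "(\<Sum>a\<in>{0..S}. indicator (cell S a) t) = (1::real)"
proof -
  have "(\<Sum>a\<in>{0..S}. indicator (cell S a) t) = (\<Sum>a\<in>{0..S}. if a = quant1 S t then 1 else (0::real))"
    by (intro sum.cong) (auto simp: cell_def indicator_def)
  also have "\<dots> = 1" using quant1_le[of S t] by simp
  finally show ?thesis .
qed

lemma cell_sub: "a \<le> S \<Longrightarrow> {real a..<real a + 1} \<subseteq> cell S a"
proof
  fix t assume a: "a \<le> S" and t: "t \<in> {real a..<real a + 1}"
  then have "\<lfloor>t\<rfloor> = int a" by (simp add: floor_eq_iff)
  then show "t \<in> cell S a" using a by (simp add: cell_def quant1_def)
qed

lemma integrable_cell: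
  assumes "\<sigma> > 0"
  shows "integrable lborel (\<lambda>s. indicator (cell S a) s * normal_density w \<sigma> s)"
proof -
  have "integrable lborel (normal_density w \<sigma>)" using integrable_normal_density[OF assms] .
  from integrable_mult_indicator[of "cell S a" lborel, OF _ this] show ?thesis by simp
qed

lemma pc_pos:
  assumes "\<sigma> > 0" "a \<le> S" shows "pc \<sigma> S w a > 0"
proof -
  let ?f = "\<lambda>s. indicator (cell S a) s * normal_density w \<sigma> s"
  have nn: "pc \<sigma> S w a \<ge> 0" unfolding pc_def by (intro Bochner_Integration.integral_nonneg) auto
  show ?thesis
  proof (rule ccontr)
    assume "\<not> ?thesis"
    then have "integral\<^sup>L lborel ?f = 0" using nn unfolding pc_def by simp
    then have "AE s in lborel. ?f s = 0"
      using integral_nonneg_eq_0_iff_AE[OF integrable_cell[OF assms(1)]] by auto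
    moreover have nz: "?f s \<noteq> 0" if "s \<in> {real a..<real a + 1}" for s
      using that cell_sub[OF assms(2)] normal_density_pos[OF assms(1), of w s] by (auto simp: indicator_def)
    ultimately have "AE s in lborel. s \<notin> {real a..<real a + 1}"
      apply -
      apply (erule AE_mp)
      apply (rule AE_I2)
      by blast
    then have "emeasure lborel {real a..<real a + 1} = 0"
      by (subst (asm) AE_iff_measurable[where N="{real a..<real a + 1}"]) auto
    then show False by simp
  qed
qed

lemma pc_sum:
  assumes "\<sigma> > 0" shows "(\<Sum>a\<in>{0..S}. pc \<sigma> S w a) = 1"
proof -
  have "(\<Sum>a\<in>{0..S}. pc \<sigma> S w a) = (\<integral>s. (\<Sum>a\<in>{0..S}. indicator (cell S a) s * normal_density w \<sigma> s) \<partial>lborel)"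
    unfolding pc_def using integrable_cell[OF assms]
    by (subst Bochner_Integration.integral_sum) auto
  also have "\<dots> = (\<integral>s. normal_density w \<sigma> s \<partial>lborel)"
    by (simp add: sum_distrib_right[symmetric] cell_sum)
  also have "\<dots> = 1" using integral_normal_density[OF assms] .
  finally show ?thesis .
qed

lemma pc_meas[measurable]: "(\<lambda>w. pc \<sigma> S w a) \<in> borel_measurable borel"
  unfolding pc_def normal_density_def
  by (rule sigma_finite_measure.borel_measurable_lebesgue_integral[OF sigma_finite_lborel]) measurable

lemma pc_shift:
  assumes "\<sigma> > 0"
  shows "(\<integral>\<^sup>+t. ennreal (normal_density 0 \<sigma> t * indicator (cell S a) (w + t)) \<partial>lborel) = ennreal (pc \<sigma> S w a)"
proof -
  have "ennreal (pc \<sigma> S w a) = (\<integral>\<^sup>+s. ennreal (indicator (cell S a) s * normal_density w \<sigma> s) \<partial>lborel)"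
    unfolding pc_def using integrable_cell[OF assms]
    by (subst nn_integral_eq_integral) auto
  also have "\<dots> = (\<integral>\<^sup>+t. ennreal (indicator (cell S a) (w + t) * normal_density w \<sigma> (w + t)) \<partial>lborel)"
    using nn_integral_real_affine[where c=1 and t=w and f="\<lambda>s. ennreal (indicator (cell S a) s * normal_density w \<sigma> s)"] by simp
  also have "\<dots> = (\<integral>\<^sup>+t. ennreal (normal_density 0 \<sigma> t * indicator (cell S a) (w + t)) \<partial>lborel)"
    by (simp add: normal_density_def mult.commute)
  finally show ?thesis by simp
qed



lemma pc_kl:
  assumes sp: "\<sigma> > 0"
  shows "(\<Sum>a\<in>{0..S}. pc \<sigma> S w a * ln (pc \<sigma> S w a / pc \<sigma> S w' a)) \<le> (w - w')\<^sup>2 / (2 * \<sigma>\<^sup>2)"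
proof -
  define c1 where "c1 = (w - w') / \<sigma>\<^sup>2"
  define c0 where "c0 = - (w - w') * (w + w') / (2 * \<sigma>\<^sup>2)"
  define h where "h s = c1 * s + c0" for s
  have lnr: "ln (normal_density w \<sigma> s / normal_density w' \<sigma> s) = h s" for s
  proof -
    define K where "K = 1 / sqrt (2 * pi * \<sigma>\<^sup>2)"
    have K: "K > 0" using sp unfolding K_def by simp
    have "normal_density w \<sigma> s / normal_density w' \<sigma> s
          = (K * exp (-(s - w)\<^sup>2 / (2 * \<sigma>\<^sup>2))) / (K * exp (-(s - w')\<^sup>2 / (2 * \<sigma>\<^sup>2)))"
      unfolding normal_density_def K_def by simp
    also have "\<dots> = exp (-(s - w)\<^sup>2 / (2 * \<sigma>\<^sup>2)) / exp (-(s - w')\<^sup>2 / (2 * \<sigma>\<^sup>2))"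
      using K by simp
    also have "\<dots> = exp (-(s - w)\<^sup>2 / (2 * \<sigma>\<^sup>2) - (-(s - w')\<^sup>2 / (2 * \<sigma>\<^sup>2)))"
      by (simp only: exp_diff)
    finally have "ln (normal_density w \<sigma> s / normal_density w' \<sigma> s) = -(s - w)\<^sup>2 / (2 * \<sigma>\<^sup>2) - (-(s - w')\<^sup>2 / (2 * \<sigma>\<^sup>2))"
      by simp
    also have "\<dots> = h s" using sp unfolding h_def c1_def c0_def
      by (simp add: field_simps power2_eq_square)
    finally show ?thesis .
  qed
  have ih: "integrable lborel (\<lambda>s. normal_density w \<sigma> s * h s)"
  proof -
    have "integrable lborel (\<lambda>s. c1 * (normal_density w \<sigma> s * s) + c0 * normal_density w \<sigma> s)"
      using integrable_normal_moment_nz_1[OF sp, of w] integrable_normal_density[OF sp, of w] by auto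
    then show ?thesis unfolding h_def by (simp add: algebra_simps)
  qed
  have inth: "(\<integral>s. normal_density w \<sigma> s * h s \<partial>lborel) = (w - w')\<^sup>2 / (2 * \<sigma>\<^sup>2)"
  proof -
    have "(\<integral>s. normal_density w \<sigma> s * h s \<partial>lborel)
        = (\<integral>s. c1 * (normal_density w \<sigma> s * s) + c0 * normal_density w \<sigma> s \<partial>lborel)"
      unfolding h_def by (simp add: algebra_simps)
    also have "\<dots> = c1 * w + c0"
      using integrable_normal_moment_nz_1[OF sp, of w] integrable_normal_density[OF sp, of w]
        integral_normal_moment_nz_1[OF sp, of w] integral_normal_density[OF sp, of w] by simp
    also have "\<dots> = (w - w')\<^sup>2 / (2 * \<sigma>\<^sup>2)" using sp unfolding c1_def c0_def
      by (simp add: field_simps power2_eq_square)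
    finally show ?thesis .
  qed
  have ihc: "integrable lborel (\<lambda>s. indicator (cell S a) s * (normal_density w \<sigma> s * h s))" for a
    using integrable_mult_indicator[of "cell S a" lborel, OF _ ih] by simp
  have step: "pc \<sigma> S w a * ln (pc \<sigma> S w a / pc \<sigma> S w' a)
      \<le> (\<integral>s. indicator (cell S a) s * (normal_density w \<sigma> s * h s) \<partial>lborel)" if a: "a \<le> S" for a
  proof -
    have "pc \<sigma> S w a * ln (pc \<sigma> S w a / pc \<sigma> S w' a)
       \<le> (\<integral>s. (indicator (cell S a) s * normal_density w \<sigma> s) *
               ln ((indicator (cell S a) s * normal_density w \<sigma> s) / (indicator (cell S a) s * normal_density w' \<sigma> s)) \<partial>lborel)"
      unfolding pc_def
    proof (rule logsum_integral)
      show "integrable lborel (\<lambda>s. indicator (cell S a) s * normal_density w \<sigma> s)" by (rule integrable_cell[OF sp])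
      show "integrable lborel (\<lambda>s. indicator (cell S a) s * normal_density w' \<sigma> s)" by (rule integrable_cell[OF sp])
      have "(\<lambda>s. (indicator (cell S a) s * normal_density w \<sigma> s) *
               ln ((indicator (cell S a) s * normal_density w \<sigma> s) / (indicator (cell S a) s * normal_density w' \<sigma> s)))
            = (\<lambda>s. indicator (cell S a) s * (normal_density w \<sigma> s * h s))"
        by (rule ext) (simp add: indicator_def lnr)
      then show "integrable lborel (\<lambda>s. (indicator (cell S a) s * normal_density w \<sigma> s) *
               ln ((indicator (cell S a) s * normal_density w \<sigma> s) / (indicator (cell S a) s * normal_density w' \<sigma> s)))"
        using ihc by simp
      show "\<And>t. t \<in> space lborel \<Longrightarrow> 0 \<le> indicator (cell S a) t * normal_density w \<sigma> t \<and>
              0 \<le> indicator (cell S a) t * normal_density w' \<sigma> t \<and>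
              (indicator (cell S a) t * normal_density w' \<sigma> t = 0 \<longrightarrow> indicator (cell S a) t * normal_density w \<sigma> t = 0)"
        using normal_density_pos[OF sp] by (auto simp: indicator_def) (metis less_irrefl)
      show "0 < (\<integral>s. indicator (cell S a) s * normal_density w \<sigma> s \<partial>lborel)"
        using pc_pos[OF sp a] unfolding pc_def .
      show "0 < (\<integral>s. indicator (cell S a) s * normal_density w' \<sigma> s \<partial>lborel)"
        using pc_pos[OF sp a] unfolding pc_def .
    qed
    also have "\<dots> = (\<integral>s. indicator (cell S a) s * (normal_density w \<sigma> s * h s) \<partial>lborel)"
      by (intro Bochner_Integration.integral_cong refl) (simp add: indicator_def lnr)
    finally show ?thesis .
  qed
  have "(\<Sum>a\<in>{0..S}. pc \<sigma> S w a * ln (pc \<sigma> S w a / pc \<sigma> S w' a))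
      \<le> (\<Sum>a\<in>{0..S}. (\<integral>s. indicator (cell S a) s * (normal_density w \<sigma> s * h s) \<partial>lborel))"
    using step by (intro sum_mono) auto
  also have "\<dots> = (\<integral>s. (\<Sum>a\<in>{0..S}. indicator (cell S a) s * (normal_density w \<sigma> s * h s)) \<partial>lborel)"
    using ihc by (subst Bochner_Integration.integral_sum) auto
  also have "\<dots> = (\<integral>s. normal_density w \<sigma> s * h s \<partial>lborel)"
    by (simp add: sum_distrib_right[symmetric] cell_sum)
  also have "\<dots> = (w - w')\<^sup>2 / (2 * \<sigma>\<^sup>2)" by (rule inth)
  finally show ?thesis .
qed



lemma idx_bounds:
  fixes s :: real and n :: nat
  assumes "n \<ge> 1" "0 \<le> s" "s \<le> real n"
  shows "real (min (n-1) (nat \<lfloor>s\<rfloor>)) \<le> s \<and> s \<le> real (min (n-1) (nat \<lfloor>s\<rfloor>)) + 1"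
proof (cases "nat \<lfloor>s\<rfloor> \<le> n - 1")
  case True
  then have "min (n-1) (nat \<lfloor>s\<rfloor>) = nat \<lfloor>s\<rfloor>" by simp
  moreover have "real (nat \<lfloor>s\<rfloor>) = of_int \<lfloor>s\<rfloor>" using assms by simp
  ultimately show ?thesis by (simp add: of_int_floor_le less_imp_le)
next
  case False
  then have m: "min (n-1) (nat \<lfloor>s\<rfloor>) = n - 1" by simp
  have "real (n - 1) \<le> real (nat \<lfloor>s\<rfloor>)" using False by simp
  also have "real (nat \<lfloor>s\<rfloor>) = of_int \<lfloor>s\<rfloor>" using assms by simp
  also have "\<dots> \<le> s" by simp
  finally show ?thesis using m assms by (simp add: of_nat_diff)
qed

lemma sum_PiE_marg:
  fixes p :: "'d::finite \<Rightarrow> nat \<Rightarrow> real" and A :: "nat set"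
  assumes A: "finite A" and ps: "\<And>j. (\<Sum>b\<in>A. p j b) = 1"
  shows "(\<Sum>x\<in>PiE UNIV (\<lambda>_. A). (\<Prod>j\<in>UNIV. p j (x j)) * g (x i)) = (\<Sum>a\<in>A. p i a * g a)"
proof -
  define F where "F j b = p j b * (if j = i then g b else 1)" for j b
  have "(\<Prod>j\<in>UNIV. \<Sum>b\<in>A. F j b) = (\<Sum>x\<in>PiE UNIV (\<lambda>_. A). \<Prod>j\<in>UNIV. F j (x j))"
    using A by (intro prod_sum_PiE) auto
  moreover have "(\<Prod>j\<in>UNIV. \<Sum>b\<in>A. F j b) = (\<Prod>j\<in>UNIV. if j = i then (\<Sum>a\<in>A. p i a * g a) else 1)"
    by (intro prod.cong refl) (auto simp: F_def ps)
  moreover have "(\<Prod>j\<in>UNIV. if j = i then (\<Sum>a\<in>A. p i a * g a) else 1) = (\<Sum>a\<in>A. p i a * g a)"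
    by (subst prod.delta) auto
  moreover have "(\<Prod>j\<in>UNIV. F j (x j)) = (\<Prod>j\<in>UNIV. p j (x j)) * g (x i)" for x
  proof -
    have "(\<Prod>j\<in>UNIV. F j (x j)) = (\<Prod>j\<in>UNIV. p j (x j)) * (\<Prod>j\<in>UNIV. if j = i then g (x j) else 1)"
      unfolding F_def by (simp add: prod.distrib)
    also have "(\<Prod>j\<in>UNIV. if j = i then g (x j) else 1) = g (x i)"
      by (subst prod.delta) auto
    finally show ?thesis .
  qed
  ultimately show ?thesis by simp
qed

lemma ln2_ge_half: "ln (2::real) \<ge> 1/2"
proof -
  have "ln (1/2::real) \<le> 1/2 - 1" by (intro ln_le_minus_one) auto
  then show ?thesis by (simp add: ln_div)
qed



lemma norm_sq_vec: "(norm (x::real^'n))\<^sup>2 = (\<Sum>i\<in>UNIV. (x$i)\<^sup>2)"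
  unfolding norm_vec_def L2_set_def by (simp add: sum_nonneg)

lemma Pw_facts:
  fixes w :: "real^'d"
  assumes sp: "\<sigma> > 0"
  shows "\<And>x. x \<in> PiE UNIV (\<lambda>_::'d. {0..S}) \<Longrightarrow> (\<Prod>i\<in>UNIV. pc \<sigma> S (w $ i) (x i)) > 0"
    and "(\<Sum>x\<in>PiE UNIV (\<lambda>_::'d. {0..S}). \<Prod>i\<in>UNIV. pc \<sigma> S (w $ i) (x i)) = 1"
proof -
  fix x :: "'d \<Rightarrow> nat" assume "x \<in> PiE UNIV (\<lambda>_::'d. {0..S})"
  then show "(\<Prod>i\<in>UNIV. pc \<sigma> S (w $ i) (x i)) > 0"
    using pc_pos[OF sp] by (intro prod_pos) (auto simp: PiE_iff)
next
  have "(\<Prod>i\<in>(UNIV::'d set). \<Sum>a\<in>{0..S}. pc \<sigma> S (w $ i) a) = (\<Sum>x\<in>PiE UNIV (\<lambda>_::'d. {0..S}). \<Prod>i\<in>UNIV. pc \<sigma> S (w $ i) (x i))"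
    by (rule prod_sum_PiE) auto
  then show "(\<Sum>x\<in>PiE UNIV (\<lambda>_::'d. {0..S}). \<Prod>i\<in>UNIV. pc \<sigma> S (w $ i) (x i)) = 1"
    using pc_sum[OF sp] by simp
qed

lemma Pw_kl:
  fixes w w' :: "real^'d"
  assumes sp: "\<sigma> > 0"
  shows "(\<Sum>x\<in>PiE UNIV (\<lambda>_::'d. {0..S}). (\<Prod>i\<in>UNIV. pc \<sigma> S (w $ i) (x i)) *
            ln ((\<Prod>i\<in>UNIV. pc \<sigma> S (w $ i) (x i)) / (\<Prod>i\<in>UNIV. pc \<sigma> S (w' $ i) (x i))))
         \<le> (norm (w - w'))\<^sup>2 / (2 * \<sigma>\<^sup>2)"
proof -
  define X where "X = PiE (UNIV::'d set) (\<lambda>_. {0..S})"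
  define g where "g i a = ln (pc \<sigma> S (w $ i) a / pc \<sigma> S (w' $ i) a)" for i a
  have "(\<Sum>x\<in>X. (\<Prod>i\<in>UNIV. pc \<sigma> S (w $ i) (x i)) *
            ln ((\<Prod>i\<in>UNIV. pc \<sigma> S (w $ i) (x i)) / (\<Prod>i\<in>UNIV. pc \<sigma> S (w' $ i) (x i))))
      = (\<Sum>x\<in>X. \<Sum>i\<in>UNIV. (\<Prod>j\<in>UNIV. pc \<sigma> S (w $ j) (x j)) * g i (x i))"
  proof (intro sum.cong refl)
    fix x assume x: "x \<in> X"
    have "ln ((\<Prod>i\<in>UNIV. pc \<sigma> S (w $ i) (x i)) / (\<Prod>i\<in>UNIV. pc \<sigma> S (w' $ i) (x i)))
        = ln (\<Prod>i\<in>UNIV. pc \<sigma> S (w $ i) (x i) / pc \<sigma> S (w' $ i) (x i))"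
      by (simp add: prod_dividef)
    also have "\<dots> = (\<Sum>i\<in>UNIV. g i (x i))"
    proof -
      have xi: "x i \<le> S" for i using x unfolding X_def by (auto simp: PiE_iff)
      have "pc \<sigma> S (w $ i) (x i) > 0" "pc \<sigma> S (w' $ i) (x i) > 0" for i
        using pc_pos[OF sp xi] by auto
      then show ?thesis unfolding g_def
        by (intro ln_prod) (auto simp: less_irrefl, metis less_irrefl, metis less_irrefl)
    qed
    finally show "(\<Prod>i\<in>UNIV. pc \<sigma> S (w $ i) (x i)) *
            ln ((\<Prod>i\<in>UNIV. pc \<sigma> S (w $ i) (x i)) / (\<Prod>i\<in>UNIV. pc \<sigma> S (w' $ i) (x i)))
        = (\<Sum>i\<in>UNIV. (\<Prod>j\<in>UNIV. pc \<sigma> S (w $ j) (x j)) * g i (x i))"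
      by (simp add: sum_distrib_left)
  qed
  also have "\<dots> = (\<Sum>i\<in>UNIV. \<Sum>x\<in>X. (\<Prod>j\<in>UNIV. pc \<sigma> S (w $ j) (x j)) * g i (x i))"
    by (rule sum.swap)
  also have "\<dots> = (\<Sum>i\<in>UNIV. \<Sum>a\<in>{0..S}. pc \<sigma> S (w $ i) a * g i a)"
    unfolding X_def
    by (intro sum.cong refl sum_PiE_marg[where p="\<lambda>j b. pc \<sigma> S (w $ j) b"]) (auto simp: pc_sum[OF sp])
  also have "\<dots> \<le> (\<Sum>i\<in>UNIV. (w $ i - w' $ i)\<^sup>2 / (2 * \<sigma>\<^sup>2))"
    unfolding g_def by (intro sum_mono pc_kl[OF sp])
  also have "\<dots> = (norm (w - w'))\<^sup>2 / (2 * \<sigma>\<^sup>2)"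
    by (simp add: norm_sq_vec sum_divide_distrib)
  finally show ?thesis unfolding X_def .
qed



lemma cover_Q:
  fixes Zs :: "(real^'k) set" and f :: "real^'k \<Rightarrow> real^'d" and S :: nat and \<sigma> L :: real
  assumes cZ: "compact Zs" and ne: "Zs \<noteq> {}" and lip: "L-lipschitz_on Zs f" and sp: "\<sigma> > 0"
  shows "\<exists>Q. (\<forall>x\<in>PiE UNIV (\<lambda>_::'d. {0..S}). Q x > 0) \<and> (\<Sum>x\<in>PiE UNIV (\<lambda>_::'d. {0..S}). Q x) \<le> 1 \<and>
     (\<forall>v\<in>Zs. (\<Sum>x\<in>PiE UNIV (\<lambda>_::'d. {0..S}). (\<Prod>i\<in>UNIV. pc \<sigma> S (f v $ i) (x i)) *
          ln ((\<Prod>i\<in>UNIV. pc \<sigma> S (f v $ i) (x i)) / Q x))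
        \<le> real CARD('k) * ln (2 + 2 * diameter Zs * L / \<sigma>))"
proof -
  define X where "X = PiE (UNIV::'d set) (\<lambda>_. {0..S})"
  define Pw where "Pw w x = (\<Prod>i\<in>UNIV. pc \<sigma> S (w $ i) (x i))" for w :: "real^'d" and x :: "'d \<Rightarrow> nat"
  have finX: "finite X" unfolding X_def by (intro finite_PiE) auto
  have Pwpos: "Pw w x > 0" if "x \<in> X" for w x using Pw_facts(1)[OF sp that[unfolded X_def]] unfolding Pw_def .
  have Pwsum: "(\<Sum>x\<in>X. Pw w x) = 1" for w using Pw_facts(2)[OF sp] unfolding Pw_def X_def .
  have bZ: "bounded Zs" using cZ by (rule compact_imp_bounded)
  define D where "D = diameter Zs"
  have D0: "D \<ge> 0" unfolding D_def using bZ by (rule diameter_ge_0)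
  have L0: "L \<ge> 0" using lip by (rule lipschitz_on_nonneg)
  define t where "t = D * L / \<sigma>"
  have t0: "t \<ge> 0" unfolding t_def using D0 L0 sp by simp
  define n where "n = nat \<lfloor>t\<rfloor> + 1"
  have n1: "n \<ge> 1" unfolding n_def by simp
  have nt: "t < real n" unfolding n_def using t0 by linarith
  have nt2: "real n \<le> 1 + t" unfolding n_def using t0 by linarith
  have dZ: "dist u v \<le> D" if "u \<in> Zs" "v \<in> Zs" for u v
    unfolding D_def using bZ that by (rule diameter_bounded_bound)
  have "\<forall>i. \<exists>u\<in>Zs. \<forall>v\<in>Zs. u $ i \<le> v $ i"
  proof
    fix i
    have "compact ((\<lambda>v. v $ i) ` Zs)"
      by (intro compact_continuous_image cZ continuous_intros)
    then obtain m where "m \<in> (\<lambda>v. v $ i) ` Zs" "\<forall>y\<in>(\<lambda>v. v $ i) ` Zs. m \<le> y"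
      using compact_attains_inf[of "(\<lambda>v. v $ i) ` Zs"] ne by blast
    then show "\<exists>u\<in>Zs. \<forall>v\<in>Zs. u $ i \<le> v $ i" by auto
  qed
  then obtain a where aZ: "\<And>i. a i \<in> Zs" and amin: "\<And>i v. v \<in> Zs \<Longrightarrow> a i $ i \<le> v $ i"
    by metis
  have coord: "0 \<le> v $ i - a i $ i \<and> v $ i - a i $ i \<le> D" if "v \<in> Zs" for v i
  proof -
    have "v $ i - a i $ i \<le> \<bar>(v - a i) $ i\<bar>" by simp
    also have "\<dots> \<le> norm (v - a i)" by (rule component_le_norm_cart)
    also have "\<dots> \<le> D" using dZ[OF that aZ[of i]] by (simp add: dist_norm)
    finally show ?thesis using amin[OF that, of i] by simp
  qed
  define idx where "idx v = (\<lambda>i. if D = 0 then 0 else min (n-1) (nat \<lfloor>(v $ i - a i $ i) * real n / D\<rfloor>))" for v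
  define C where "C = PiE (UNIV::'k set) (\<lambda>_. {0..<n})"
  have idxC: "idx v \<in> C" for v unfolding C_def idx_def using n1 by (auto simp: PiE_iff)
  have finC: "finite C" unfolding C_def by (intro finite_PiE) auto
  have cardC: "card C = n ^ CARD('k)" unfolding C_def by (simp add: card_PiE)
  have Cpos: "card C > 0" using cardC n1 by simp
  have close: "\<bar>v $ i - u $ i\<bar> \<le> D / real n" if "v \<in> Zs" "u \<in> Zs" "idx v = idx u" for v u i
  proof (cases "D = 0")
    case True
    have "\<bar>(v - u) $ i\<bar> \<le> norm (v - u)" by (rule component_le_norm_cart)
    also have "\<dots> \<le> D" using dZ[OF that(1,2)] by (simp add: dist_norm)
    finally show ?thesis using True by simp
  next
    case False
    then have Dp: "D > 0" using D0 by simp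
    define sv where "sv = (v $ i - a i $ i) * real n / D"
    define su where "su = (u $ i - a i $ i) * real n / D"
    have svb: "0 \<le> sv \<and> sv \<le> real n"
    proof -
      have c: "0 \<le> v $ i - a i $ i" "v $ i - a i $ i \<le> D" using coord[OF that(1), of i] by auto
      have "(v $ i - a i $ i) * real n \<le> D * real n" using c by (intro mult_right_mono) auto
      then show ?thesis unfolding sv_def using Dp c by (simp add: pos_divide_le_eq mult.commute)
    qed
    have sub: "0 \<le> su \<and> su \<le> real n"
    proof -
      have c: "0 \<le> u $ i - a i $ i" "u $ i - a i $ i \<le> D" using coord[OF that(2), of i] by auto
      have "(u $ i - a i $ i) * real n \<le> D * real n" using c by (intro mult_right_mono) auto
      then show ?thesis unfolding su_def using Dp c by (simp add: pos_divide_le_eq mult.commute)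
    qed
    have "idx v i = idx u i" using that(3) by simp
    then have j: "min (n-1) (nat \<lfloor>sv\<rfloor>) = min (n-1) (nat \<lfloor>su\<rfloor>)"
      unfolding idx_def sv_def su_def using False by simp
    have "\<bar>sv - su\<bar> \<le> 1" using idx_bounds[OF n1, of sv] idx_bounds[OF n1, of su] svb sub j
      by linarith
    moreover have "v $ i - u $ i = (sv - su) * D / real n"
      unfolding sv_def su_def using Dp n1 by (simp add: field_simps)
    ultimately show ?thesis using Dp n1
      by (simp add: abs_mult divide_right_mono mult_left_le_one_le)
  qed
  define rep where "rep c = (SOME v. v \<in> Zs \<and> (c \<in> idx ` Zs \<longrightarrow> idx v = c))" for c
  have rep: "rep c \<in> Zs \<and> (c \<in> idx ` Zs \<longrightarrow> idx (rep c) = c)" for c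
  proof -
    have "\<exists>v. v \<in> Zs \<and> (c \<in> idx ` Zs \<longrightarrow> idx v = c)"
    proof (cases "c \<in> idx ` Zs")
      case True then show ?thesis by auto
    next
      case False then show ?thesis using ne by auto
    qed
    then show ?thesis unfolding rep_def by (rule someI_ex)
  qed
  define Q where "Q x = (\<Sum>c\<in>C. Pw (f (rep c)) x) / real (card C)" for x
  have Cne: "C \<noteq> {}" using idxC by blast
  have Qpos: "Q x > 0" if "x \<in> X" for x
    unfolding Q_def using Cpos finC Cne Pwpos[OF that] by (intro divide_pos_pos sum_pos) auto
  have Qsum: "(\<Sum>x\<in>X. Q x) = 1"
  proof -
    have "(\<Sum>x\<in>X. Q x) = (\<Sum>x\<in>X. \<Sum>c\<in>C. Pw (f (rep c)) x) / real (card C)"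
      unfolding Q_def by (simp add: sum_divide_distrib)
    also have "(\<Sum>x\<in>X. \<Sum>c\<in>C. Pw (f (rep c)) x) = (\<Sum>c\<in>C. \<Sum>x\<in>X. Pw (f (rep c)) x)"
      by (rule sum.swap)
    also have "\<dots> = real (card C)" by (simp add: Pwsum)
    finally show ?thesis using Cpos by simp
  qed
  have main: "(\<Sum>x\<in>X. Pw (f v) x * ln (Pw (f v) x / Q x)) \<le> real CARD('k) * ln (2 + 2 * t)"
    if vZ: "v \<in> Zs" for v
  proof -
    define u where "u = rep (idx v)"
    have uZ: "u \<in> Zs" and idxu: "idx u = idx v" using rep[of "idx v"] vZ unfolding u_def by auto
    have "(norm (v - u))\<^sup>2 = (\<Sum>i\<in>UNIV. ((v - u) $ i)\<^sup>2)" by (rule norm_sq_vec)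
    also have "\<dots> \<le> (\<Sum>i\<in>(UNIV::'k set). (D / real n)\<^sup>2)"
    proof (intro sum_mono)
      fix i
      have "\<bar>(v - u) $ i\<bar> \<le> \<bar>D / real n\<bar>" using close[OF vZ uZ idxu[symmetric], of i] D0 by simp
      then show "((v - u) $ i)\<^sup>2 \<le> (D / real n)\<^sup>2" by (simp only: abs_le_square_iff)
    qed
    also have "\<dots> = real CARD('k) * (D / real n)\<^sup>2" by simp
    finally have nvu: "(norm (v - u))\<^sup>2 \<le> real CARD('k) * (D / real n)\<^sup>2" .
    have "norm (f v - f u) \<le> L * norm (v - u)"
      using lipschitz_onD[OF lip vZ uZ] by (simp add: dist_norm)
    then have "(norm (f v - f u))\<^sup>2 \<le> (L * norm (v - u))\<^sup>2"
      by (intro power_mono) auto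
    also have "\<dots> = L\<^sup>2 * (norm (v - u))\<^sup>2" by (simp add: power_mult_distrib)
    also have "\<dots> \<le> L\<^sup>2 * (real CARD('k) * (D / real n)\<^sup>2)"
      using nvu by (intro mult_left_mono) auto
    also have "\<dots> = real CARD('k) * (L * D / real n)\<^sup>2" by (simp add: power_mult_distrib power_divide)
    also have "\<dots> \<le> real CARD('k) * \<sigma>\<^sup>2"
    proof -
      have "L * D = t * \<sigma>" unfolding t_def using sp by simp
      also have "\<dots> \<le> real n * \<sigma>" using nt sp by (intro mult_right_mono) auto
      finally have "L * D / real n \<le> \<sigma>" using n1 by (simp add: pos_divide_le_eq mult.commute)
      moreover have "0 \<le> L * D / real n" using L0 D0 by simp
      ultimately have "(L * D / real n)\<^sup>2 \<le> \<sigma>\<^sup>2" by (intro power_mono) auto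
      then show ?thesis by (intro mult_left_mono) auto
    qed
    finally have nf: "(norm (f v - f u))\<^sup>2 \<le> real CARD('k) * \<sigma>\<^sup>2" .
    have kl: "(\<Sum>x\<in>X. Pw (f v) x * ln (Pw (f v) x / Pw (f u) x)) \<le> real CARD('k) / 2"
    proof -
      have "(\<Sum>x\<in>X. Pw (f v) x * ln (Pw (f v) x / Pw (f u) x)) \<le> (norm (f v - f u))\<^sup>2 / (2 * \<sigma>\<^sup>2)"
        using Pw_kl[OF sp, of S "f v" "f u"] unfolding Pw_def X_def .
      also have "\<dots> \<le> real CARD('k) * \<sigma>\<^sup>2 / (2 * \<sigma>\<^sup>2)"
        using nf sp by (intro divide_right_mono) auto
      also have "\<dots> = real CARD('k) / 2" using sp by simp
      finally show ?thesis .
    qed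
    define N where "N = real (card C)"
    have Np: "N > 0" unfolding N_def using Cpos by simp
    have lnQ: "ln (Pw (f v) x / Q x) \<le> ln N + ln (Pw (f v) x / Pw (f u) x)" if x: "x \<in> X" for x
    proof -
      have "Pw (f u) x \<le> (\<Sum>c\<in>C. Pw (f (rep c)) x)"
        unfolding u_def using finC idxC Pwpos[OF x] by (intro member_le_sum) (auto intro: less_imp_le)
      then have Qge: "Pw (f u) x / N \<le> Q x" unfolding Q_def N_def using Cpos by (intro divide_right_mono) auto
      have p1: "Pw (f v) x > 0" "Pw (f u) x > 0" using Pwpos[OF x] by auto
      have "Pw (f v) x / Q x \<le> Pw (f v) x / (Pw (f u) x / N)"
        using Qge p1 Np Qpos[OF x] by (intro divide_left_mono) auto
      also have "\<dots> = N * (Pw (f v) x / Pw (f u) x)" using Np p1 by (simp add: field_simps)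
      finally have "ln (Pw (f v) x / Q x) \<le> ln (N * (Pw (f v) x / Pw (f u) x))"
        using p1 Qpos[OF x] Np by (subst ln_le_cancel_iff) auto
      also have "\<dots> = ln N + ln (Pw (f v) x / Pw (f u) x)" using Np p1 by (intro ln_mult_pos) auto
      finally show ?thesis .
    qed
    have "(\<Sum>x\<in>X. Pw (f v) x * ln (Pw (f v) x / Q x))
        \<le> (\<Sum>x\<in>X. Pw (f v) x * (ln N + ln (Pw (f v) x / Pw (f u) x)))"
      using lnQ Pwpos by (intro sum_mono mult_left_mono) (auto intro: less_imp_le)
    also have "\<dots> = ln N * (\<Sum>x\<in>X. Pw (f v) x) + (\<Sum>x\<in>X. Pw (f v) x * ln (Pw (f v) x / Pw (f u) x))"
      by (simp add: algebra_simps sum.distrib sum_distrib_left)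
    also have "\<dots> \<le> ln N + real CARD('k) / 2" using kl by (simp add: Pwsum)
    also have "ln N = real CARD('k) * ln (real n)" unfolding N_def cardC using n1 by (simp add: ln_realpow)
    also have "real CARD('k) * ln (real n) + real CARD('k) / 2 \<le> real CARD('k) * (ln (1 + t) + ln 2)"
    proof -
      have "ln (real n) \<le> ln (1 + t)" using n1 nt2 t0 by simp
      then have "ln (real n) + 1/2 \<le> ln (1 + t) + ln 2" using ln2_ge_half by linarith
      then have "real CARD('k) * (ln (real n) + 1/2) \<le> real CARD('k) * (ln (1 + t) + ln 2)"
        by (intro mult_left_mono) auto
      then show ?thesis by (simp add: algebra_simps)
    qed
    also have "ln (1 + t) + ln 2 = ln (2 + 2 * t)"
    proof -
      have "ln (2 * (1 + t)) = ln 2 + ln (1 + t)" using t0 by (intro ln_mult_pos) auto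
      moreover have "2 * (1 + t) = 2 + 2 * t" by simp
      ultimately show ?thesis by simp
    qed
    finally show ?thesis .
  qed
  have tt: "2 + 2 * diameter Zs * L / \<sigma> = 2 + 2 * t" unfolding t_def D_def by simp
  show ?thesis
    using Qpos Qsum main unfolding tt X_def[symmetric] Pw_def[abs_def] by (intro exI[of _ Q]) auto
qed



lemma nn_integral_vec_prod:
  fixes F :: "'d::finite \<Rightarrow> real \<Rightarrow> real"
  assumes meas: "\<And>i. F i \<in> borel_measurable borel" and nn: "\<And>i t. 0 \<le> F i t"
  shows "(\<integral>\<^sup>+e. ennreal (\<Prod>i\<in>UNIV. F i ((e::real^'d) $ i)) \<partial>lborel) = (\<Prod>i\<in>UNIV. \<integral>\<^sup>+t. ennreal (F i t) \<partial>lborel)"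
proof -
  define ix where "ix b = (SOME i. b = axis i (1::real))" for b :: "real^'d"
  have ixa: "ix (axis i 1) = i" for i
    unfolding ix_def by (rule some_equality) (auto simp: axis_eq_axis)
  have Bas: "(Basis :: (real^'d) set) = (\<lambda>i. axis i 1) ` UNIV"
    by (auto simp: Basis_vec_def)
  have inj: "inj_on (\<lambda>i::'d. axis i (1::real)) UNIV"
    by (rule inj_onI) (simp add: axis_eq_axis)
  define G where "G b t = ennreal (F (ix b) t)" for b :: "real^'d" and t
  have "(\<integral>\<^sup>+e. (\<Prod>b\<in>Basis. G b (e \<bullet> b)) \<partial>lborel) = (\<Prod>b\<in>Basis. \<integral>\<^sup>+t. G b t \<partial>lborel)"
    unfolding G_def using meas nn by (intro nn_integral_lborel_prod) auto
  moreover have "(\<Prod>b\<in>Basis. G b (e \<bullet> b)) = ennreal (\<Prod>i\<in>UNIV. F i (e $ i))" for e :: "real^'d"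
  proof -
    have "(\<Prod>b\<in>Basis. G b (e \<bullet> b)) = (\<Prod>i\<in>UNIV. G (axis i 1) (e \<bullet> axis i 1))"
      unfolding Bas by (subst prod.reindex[OF inj]) simp
    also have "\<dots> = (\<Prod>i\<in>UNIV. ennreal (F i (e $ i)))"
      unfolding G_def by (simp add: ixa inner_axis)
    also have "\<dots> = ennreal (\<Prod>i\<in>UNIV. F i (e $ i))" using nn by (simp add: prod_ennreal)
    finally show ?thesis .
  qed
  moreover have "(\<Prod>b\<in>Basis. \<integral>\<^sup>+t. G b t \<partial>lborel) = (\<Prod>i\<in>UNIV. \<integral>\<^sup>+t. ennreal (F i t) \<partial>lborel)"
    unfolding Bas G_def by (subst prod.reindex[OF inj]) (simp add: ixa)
  ultimately show ?thesis by simp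
qed

lemma vec_nth_meas[measurable]: "(\<lambda>y::real^'d. y $ i) \<in> borel_measurable borel"
  by (intro borel_measurable_continuous_onI continuous_intros)

lemma vec_nth_meas_comp[measurable (raw)]:
  "h \<in> borel_measurable N \<Longrightarrow> (\<lambda>w. (h w :: real^'d) $ i) \<in> borel_measurable N"
  using measurable_compose[OF _ vec_nth_meas] by blast

lemma E_meas:
  fixes g :: "real^'k \<Rightarrow> real^'d"
  assumes [measurable]: "g \<in> borel_measurable borel"
  shows "{(v, e). \<forall>i. (g v + e) $ i \<in> cell S (x i)} \<in> sets (borel \<Otimes>\<^sub>M (lborel :: (real^'d) measure))"
proof -
  have "Measurable.pred (borel \<Otimes>\<^sub>M (lborel :: (real^'d) measure)) (\<lambda>p. \<forall>i. (g (fst p) + snd p) $ i \<in> cell S (x i))"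
    by measurable
  note this[measurable]
  have "{p \<in> space (borel \<Otimes>\<^sub>M (lborel :: (real^'d) measure)). \<forall>i. (g (fst p) + snd p) $ i \<in> cell S (x i)} \<in> sets (borel \<Otimes>\<^sub>M (lborel :: (real^'d) measure))"
    by measurable
  moreover have "{p \<in> space (borel \<Otimes>\<^sub>M (lborel :: (real^'d) measure)). \<forall>i. (g (fst p) + snd p) $ i \<in> cell S (x i)} = {(v, e). \<forall>i. (g v + e) $ i \<in> cell S (x i)}"
    by (auto simp: space_pair_measure)
  ultimately show ?thesis by simp
qed



lemma pc_le1: "\<sigma> > 0 \<Longrightarrow> a \<le> S \<Longrightarrow> pc \<sigma> S w a \<le> 1"
proof -
  assume sp: "\<sigma> > 0" and a: "a \<le> S"
  have "pc \<sigma> S w a \<le> (\<Sum>b\<in>{0..S}. pc \<sigma> S w b)"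
    using a pc_pos[OF sp] by (intro member_le_sum) (auto intro: less_imp_le)
  then show ?thesis using pc_sum[OF sp] by simp
qed

lemma quant_iff: "quant S y = x \<longleftrightarrow> (\<forall>i. y $ i \<in> cell S (x i))"
  unfolding quant_def cell_def quant1_def by (simp add: fun_eq_iff)

lemma q_formula:
  fixes M :: "'w measure"
    and Zs :: "(real^'k) set"
    and f :: "real^'k \<Rightarrow> real^'d"
    and z :: "'w \<Rightarrow> real^'k"
    and \<epsilon> :: "'w \<Rightarrow> real^'d"
    and \<sigma> :: real and S :: nat
  assumes M: "prob_space M"
    and Zsets: "Zs \<in> sets borel" and fcont: "continuous_on Zs f"
    and sp: "\<sigma> > 0"
    and zZ: "\<forall>\<omega>\<in>space M. z \<omega> \<in> Zs"
    and dist: "distributed M lborel \<epsilon> (\<lambda>y. ennreal (iso_gauss_density \<sigma> y))"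
    and zmeas[measurable]: "z \<in> borel_measurable M"
    and indep: "\<forall>A\<in>sets borel. \<forall>B\<in>sets borel.
           measure M {\<omega>\<in>space M. z \<omega> \<in> A \<and> \<epsilon> \<omega> \<in> B}
           = measure M {\<omega>\<in>space M. z \<omega> \<in> A} * measure M {\<omega>\<in>space M. \<epsilon> \<omega> \<in> B}"
    and x: "x \<in> PiE UNIV (\<lambda>_. {0..S})"
  shows "measure M {\<omega>\<in>space M. quant S (f (z \<omega>) + \<epsilon> \<omega>) = x}
         = (\<integral>\<omega>. (\<Prod>i\<in>UNIV. pc \<sigma> S (f (z \<omega>) $ i) (x i)) \<partial>M)"
proof -
  interpret prob_space M by fact
  define f' where "f' v = indicator Zs v *\<^sub>R f v" for v
  have f'meas[measurable]: "f' \<in> borel_measurable borel"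
    unfolding f'_def[abs_def] using Zsets fcont by (rule borel_measurable_continuous_on_indicator)
  have f'eq: "f' (z \<omega>) = f (z \<omega>)" if "\<omega> \<in> space M" for \<omega>
    using zZ that unfolding f'_def by simp
  have emeas[measurable]: "\<epsilon> \<in> borel_measurable M"
    using distributed_measurable[OF dist] by simp
  define g where "g y = ennreal (iso_gauss_density \<sigma> y)" for y :: "real^'d"
  have gmeas[measurable]: "g \<in> borel_measurable lborel"
    unfolding g_def[abs_def] iso_gauss_density_def by measurable
  define \<nu> where "\<nu> = distr M borel z"
  define \<gamma> where "\<gamma> = distr M lborel \<epsilon>"
  have \<gamma>eq: "\<gamma> = density lborel g"
    unfolding \<gamma>_def g_def using distributed_distr_eq_density[OF dist] by simp
  have p\<nu>: "prob_space \<nu>" unfolding \<nu>_def by (rule prob_space_distr) simp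
  have p\<gamma>: "prob_space \<gamma>" unfolding \<gamma>_def by (rule prob_space_distr) simp
  interpret G: sigma_finite_measure \<gamma> using p\<gamma> by (rule prob_space_imp_sigma_finite)
  define J where "J = distr M (borel \<Otimes>\<^sub>M lborel) (\<lambda>\<omega>. (z \<omega>, \<epsilon> \<omega>))"
  have Zmeas: "(\<lambda>\<omega>. (z \<omega>, \<epsilon> \<omega>)) \<in> measurable M (borel \<Otimes>\<^sub>M lborel)" by measurable
  have J: "\<nu> \<Otimes>\<^sub>M \<gamma> = J"
  proof (rule pair_measure_eqI)
    show "sigma_finite_measure \<nu>" using p\<nu> by (rule prob_space_imp_sigma_finite)
    show "sigma_finite_measure \<gamma>" using p\<gamma> by (rule prob_space_imp_sigma_finite)
    show "sets (\<nu> \<Otimes>\<^sub>M \<gamma>) = sets J"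
      unfolding J_def \<nu>_def \<gamma>_def by (simp cong: sets_pair_measure_cong)
    fix A B assume A: "A \<in> sets \<nu>" and B: "B \<in> sets \<gamma>"
    then have A': "A \<in> sets borel" and B': "B \<in> sets borel" unfolding \<nu>_def \<gamma>_def by auto
    have "emeasure J (A \<times> B) = emeasure M ((\<lambda>\<omega>. (z \<omega>, \<epsilon> \<omega>)) -` (A \<times> B) \<inter> space M)"
      unfolding J_def using A' B' by (subst emeasure_distr) auto
    also have "(\<lambda>\<omega>. (z \<omega>, \<epsilon> \<omega>)) -` (A \<times> B) \<inter> space M = {\<omega>\<in>space M. z \<omega> \<in> A \<and> \<epsilon> \<omega> \<in> B}" by auto
    also have "emeasure M \<dots> = ennreal (measure M {\<omega>\<in>space M. z \<omega> \<in> A} * measure M {\<omega>\<in>space M. \<epsilon> \<omega> \<in> B})"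
      using indep A' B' by (simp add: emeasure_eq_measure)
    also have "\<dots> = emeasure M {\<omega>\<in>space M. z \<omega> \<in> A} * emeasure M {\<omega>\<in>space M. \<epsilon> \<omega> \<in> B}"
      by (simp add: emeasure_eq_measure ennreal_mult)
    also have "emeasure M {\<omega>\<in>space M. z \<omega> \<in> A} = emeasure \<nu> A"
      unfolding \<nu>_def using A' by (subst emeasure_distr) (auto intro!: arg_cong[where f="emeasure M"])
    also have "emeasure M {\<omega>\<in>space M. \<epsilon> \<omega> \<in> B} = emeasure \<gamma> B"
      unfolding \<gamma>_def using B' by (subst emeasure_distr) (auto intro!: arg_cong[where f="emeasure M"])
    finally show "emeasure \<nu> A * emeasure \<gamma> B = emeasure J (A \<times> B)" by simp
  qed
  define E where "E = {(v, e). \<forall>i. (f' v + e) $ i \<in> cell S (x i)}"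
  have Esets: "E \<in> sets (borel \<Otimes>\<^sub>M (lborel :: (real^'d) measure))"
    unfolding E_def by (rule E_meas) (rule f'meas)
  have seteq: "{\<omega>\<in>space M. quant S (f (z \<omega>) + \<epsilon> \<omega>) = x} = (\<lambda>\<omega>. (z \<omega>, \<epsilon> \<omega>)) -` E \<inter> space M"
    using f'eq unfolding E_def by (auto simp: quant_iff)
  define Pf where "Pf v = (\<Prod>i\<in>UNIV. pc \<sigma> S (f' v $ i) (x i))" for v
  have Pfmeas[measurable]: "Pf \<in> borel_measurable borel" unfolding Pf_def by measurable
  have xS: "x i \<le> S" for i using x by (auto simp: PiE_iff)
  have sect: "emeasure \<gamma> (Pair v -` E) = ennreal (Pf v)" for v
  proof -
    have sets: "Pair v -` E \<in> sets lborel"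
      using sets_Pair1[OF Esets] .
    have "emeasure \<gamma> (Pair v -` E) = (\<integral>\<^sup>+e. g e * indicator (Pair v -` E) e \<partial>lborel)"
      unfolding \<gamma>eq using sets by (intro emeasure_density) auto
    also have "\<dots> = (\<integral>\<^sup>+e. ennreal (\<Prod>i\<in>UNIV. normal_density 0 \<sigma> (e $ i) * indicator (cell S (x i)) (f' v $ i + e $ i)) \<partial>lborel)"
    proof (intro nn_integral_cong)
      fix e :: "real^'d"
      have "indicator (Pair v -` E) e = (\<Prod>i\<in>UNIV. indicator (cell S (x i)) (f' v $ i + e $ i) :: real)"
        unfolding E_def by (auto simp: indicator_def prod.neutral)
      then have r: "iso_gauss_density \<sigma> e * indicator (Pair v -` E) e = (\<Prod>i\<in>UNIV. normal_density 0 \<sigma> (e $ i) * indicator (cell S (x i)) (f' v $ i + e $ i))"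
        unfolding iso_gauss_density_def by (simp add: prod.distrib)
      have "g e * indicator (Pair v -` E) e = ennreal (iso_gauss_density \<sigma> e) * ennreal (indicator (Pair v -` E) e)"
        unfolding g_def by (simp add: ennreal_indicator)
      also have "\<dots> = ennreal (iso_gauss_density \<sigma> e * indicator (Pair v -` E) e)"
        unfolding iso_gauss_density_def by (rule ennreal_mult[symmetric]) (auto intro: prod_nonneg)
      finally show "g e * indicator (Pair v -` E) e = ennreal (\<Prod>i\<in>UNIV. normal_density 0 \<sigma> (e $ i) * indicator (cell S (x i)) (f' v $ i + e $ i))"
        using r by simp
    qed
    also have "\<dots> = (\<Prod>i\<in>UNIV. \<integral>\<^sup>+t. ennreal (normal_density 0 \<sigma> t * indicator (cell S (x i)) (f' v $ i + t)) \<partial>lborel)"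
      by (rule nn_integral_vec_prod) auto
    also have "\<dots> = (\<Prod>i\<in>UNIV. ennreal (pc \<sigma> S (f' v $ i) (x i)))"
      using pc_shift[OF sp] by simp
    also have "\<dots> = ennreal (Pf v)" unfolding Pf_def
      using pc_pos[OF sp xS] by (simp add: prod_ennreal less_imp_le)
    finally show ?thesis .
  qed
  have "measure M {\<omega>\<in>space M. quant S (f (z \<omega>) + \<epsilon> \<omega>) = x} = measure J E"
    unfolding seteq J_def using Zmeas Esets by (simp add: measure_distr)
  also have "measure J E = enn2real (emeasure (\<nu> \<Otimes>\<^sub>M \<gamma>) E)" unfolding J measure_def ..
  also have "emeasure (\<nu> \<Otimes>\<^sub>M \<gamma>) E = (\<integral>\<^sup>+v. emeasure \<gamma> (Pair v -` E) \<partial>\<nu>)"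
  proof -
    have "E \<in> sets (\<nu> \<Otimes>\<^sub>M \<gamma>)" using Esets unfolding \<nu>_def \<gamma>_def by (simp cong: sets_pair_measure_cong)
    then show ?thesis by (rule G.emeasure_pair_measure_alt)
  qed
  also have "\<dots> = (\<integral>\<^sup>+v. ennreal (Pf v) \<partial>\<nu>)" by (simp add: sect)
  also have "\<dots> = (\<integral>\<^sup>+\<omega>. ennreal (Pf (z \<omega>)) \<partial>M)" unfolding \<nu>_def
    by (subst nn_integral_distr) auto
  also have "\<dots> = ennreal (\<integral>\<omega>. Pf (z \<omega>) \<partial>M)"
  proof (rule nn_integral_eq_integral)
    show "integrable M (\<lambda>\<omega>. Pf (z \<omega>))"
    proof (rule integrable_const_bound[where B=1])
      show "AE \<omega> in M. norm (Pf (z \<omega>)) \<le> 1"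
      proof (rule AE_I2)
        fix \<omega>
        have "0 \<le> Pf (z \<omega>)" unfolding Pf_def
          by (rule prod_nonneg) (use pc_pos[OF sp xS] in \<open>auto intro: less_imp_le\<close>)
        moreover have "Pf (z \<omega>) \<le> 1" unfolding Pf_def
          by (rule prod_le_1) (use pc_pos[OF sp xS] pc_le1[OF sp xS] in \<open>auto intro: less_imp_le\<close>)
        ultimately show "norm (Pf (z \<omega>)) \<le> 1" by simp
      qed
    qed measurable
    show "AE \<omega> in M. 0 \<le> Pf (z \<omega>)" unfolding Pf_def
      using pc_pos[OF sp xS] by (intro AE_I2 prod_nonneg) (auto intro: less_imp_le)
  qed
  also have "enn2real (ennreal (\<integral>\<omega>. Pf (z \<omega>) \<partial>M)) = (\<integral>\<omega>. Pf (z \<omega>) \<partial>M)"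
    unfolding Pf_def using pc_pos[OF sp xS]
    by (intro enn2real_ennreal integral_nonneg_AE AE_I2 prod_nonneg) (auto intro: less_imp_le)
  also have "(\<integral>\<omega>. Pf (z \<omega>) \<partial>M) = (\<integral>\<omega>. (\<Prod>i\<in>UNIV. pc \<sigma> S (f (z \<omega>) $ i) (x i)) \<partial>M)"
    unfolding Pf_def using f'eq by (intro Bochner_Integration.integral_cong) auto
  finally show ?thesis .
qed



theorem proposition2:
  fixes M :: "'w measure"
    and Zs :: "(real^'k) set"
    and f :: "real^'k \<Rightarrow> real^'d"
    and z :: "'w \<Rightarrow> real^'k"
    and \<epsilon> :: "'w \<Rightarrow> real^'d"
    and L \<sigma> :: real and S :: nat
  assumes "prob_space M"
    and "compact Zs"
    and "L-lipschitz_on Zs f"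
    and "\<sigma> > 0"
    and "\<forall>\<omega>\<in>space M. z \<omega> \<in> Zs"
    and "distributed M lborel \<epsilon> (\<lambda>y. ennreal (iso_gauss_density \<sigma> y))"
    and "z \<in> borel_measurable M"
    and "\<forall>A\<in>sets borel. \<forall>B\<in>sets borel.
           measure M {\<omega>\<in>space M. z \<omega> \<in> A \<and> \<epsilon> \<omega> \<in> B}
           = measure M {\<omega>\<in>space M. z \<omega> \<in> A} * measure M {\<omega>\<in>space M. \<epsilon> \<omega> \<in> B}"
  shows "dual_total_correlation (PiE UNIV (\<lambda>_. {0..S}))
           (\<lambda>x. measure M {\<omega>\<in>space M. quant S (f (z \<omega>) + \<epsilon> \<omega>) = x})
         \<le> real CARD('k) * ln (2 + 2 * diameter Zs * L / \<sigma>)"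
proof -
  interpret prob_space M by fact
  note zmeas[measurable] = assms(7)
  have sp: "\<sigma> > 0" by fact
  have ne: "Zs \<noteq> {}" using assms(5) not_empty by blast
  have cont: "continuous_on Zs f" using assms(3) by (rule lipschitz_on_continuous_on)
  have Zsets: "Zs \<in> sets borel" using assms(2) by (intro borel_closed compact_imp_closed)
  define f' where "f' v = indicator Zs v *\<^sub>R f v" for v
  have f'meas[measurable]: "f' \<in> borel_measurable borel"
    unfolding f'_def[abs_def] using Zsets cont by (rule borel_measurable_continuous_on_indicator)
  have "(\<lambda>\<omega>. f' (z \<omega>)) \<in> borel_measurable M" by measurable
  moreover have "\<And>\<omega>. \<omega> \<in> space M \<Longrightarrow> f' (z \<omega>) = f (z \<omega>)" using assms(5) unfolding f'_def by simp
  ultimately have fz[measurable]: "(\<lambda>\<omega>. f (z \<omega>)) \<in> borel_measurable M"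
    by (simp cong: measurable_cong)
  obtain Q where Qpos: "\<forall>x\<in>PiE UNIV (\<lambda>_::'d. {0..S}). Q x > 0"
    and Qsum: "(\<Sum>x\<in>PiE UNIV (\<lambda>_::'d. {0..S}). Q x) \<le> 1"
    and Qkl: "\<forall>v\<in>Zs. (\<Sum>x\<in>PiE UNIV (\<lambda>_::'d. {0..S}). (\<Prod>i\<in>UNIV. pc \<sigma> S (f v $ i) (x i)) *
          ln ((\<Prod>i\<in>UNIV. pc \<sigma> S (f v $ i) (x i)) / Q x))
        \<le> real CARD('k) * ln (2 + 2 * diameter Zs * L / \<sigma>)"
    using cover_Q[OF assms(2) ne assms(3) sp, of S] by blast
  show ?thesis
  proof (rule entropy_bound[where p="\<lambda>\<omega> i a. pc \<sigma> S (f (z \<omega>) $ i) a" and Q=Q])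
    show "prob_space M" by fact
    show "\<And>i a. (\<lambda>\<omega>. pc \<sigma> S (f (z \<omega>) $ i) a) \<in> borel_measurable M" by measurable
    show "\<And>\<omega> i a. \<omega> \<in> space M \<Longrightarrow> a \<le> S \<Longrightarrow> pc \<sigma> S (f (z \<omega>) $ i) a > 0"
      using pc_pos[OF sp] by blast
    show "\<And>\<omega> i. \<omega> \<in> space M \<Longrightarrow> (\<Sum>a\<in>{0..S}. pc \<sigma> S (f (z \<omega>) $ i) a) = 1"
      using pc_sum[OF sp] by blast
    show "\<And>x. x \<in> PiE UNIV (\<lambda>_. {0..S}) \<Longrightarrow> measure M {\<omega>\<in>space M. quant S (f (z \<omega>) + \<epsilon> \<omega>) = x}
             = (\<integral>\<omega>. (\<Prod>i\<in>UNIV. pc \<sigma> S (f (z \<omega>) $ i) (x i)) \<partial>M)"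
      using q_formula[OF assms(1) Zsets cont sp assms(5) assms(6) assms(7) assms(8)] by blast
    show "\<And>x. x \<in> PiE UNIV (\<lambda>_. {0..S}) \<Longrightarrow> Q x > 0" using Qpos by blast
    show "(\<Sum>x\<in>PiE UNIV (\<lambda>_. {0..S}). Q x) \<le> 1" by (rule Qsum)
    show "\<And>\<omega>. \<omega> \<in> space M \<Longrightarrow> (\<Sum>x\<in>PiE UNIV (\<lambda>_. {0..S}). (\<Prod>i\<in>UNIV. pc \<sigma> S (f (z \<omega>) $ i) (x i)) *
            ln ((\<Prod>i\<in>UNIV. pc \<sigma> S (f (z \<omega>) $ i) (x i)) / Q x)) \<le> real CARD('k) * ln (2 + 2 * diameter Zs * L / \<sigma>)"
      using Qkl assms(5) by blast
  qed
qed

end
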